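(* $\mathfrak{F}\models_{\mathbf{K}\mathsf{G}^2}\phi$ iff for any model $\mathfrak{M}$ on $\mathfrak{F}$ and any $w\in\mathfrak{F}$, $v_1(\phi,w)=1$.
   Context: The language $\mathsf{bi}\mathcal{L}^\neg_{\Box,\lozenge}$ is given by $\phi ::= p\mid\neg\phi\mid\phi\wedge\phi\mid\phi\vee\phi\mid\phi\rightarrow\phi\mid\phi\ominus\phi\mid\Box\phi\mid\lozenge\phi$, where $\ominus$ denotes the Gödel coimplication. On $[0,1]$: $a\wedge_\mathsf{G}b=\min(a,b)$, $a\vee_\mathsf{G}b=\max(a,b)$, $a\rightarrow_\mathsf{G}b=1$ if $a\le b$ and $b$ otherwise, $b\ominus_\mathsf{G}a=0$ if $b\le a$ and $b$ otherwise. A $\mathbf{K}\mathsf{G}^2$ model is $\mathfrak{M}=\langle W,R,v_1,v_2\rangle$ with $\langle W,R\rangle$ a crisp frame ($R\subseteq W\times W$) and $v_1,v_2:\mathsf{Var}\times W\to[0,1]$, extended by: $v_1(\neg\phi)=v_2(\phi)$, $v_2(\neg\phi)=v_1(\phi)$; $v_1(\phi\wedge\psi)=v_1(\phi)\wedge_\mathsf{G}v_1(\psi)$, $v_2(\phi\wedge\psi)=v_2(\phi)\vee_\mathsf{G}v_2(\psi)$; $v_1(\phi\vee\psi)=v_1(\phi)\vee_\mathsf{G}v_1(\psi)$, $v_2(\phi\vee\psi)=v_2(\phi)\wedge_\mathsf{G}v_2(\psi)$; $v_1(\phi\rightarrow\psi)=v_1(\phi)\rightarrow_\mathsf{G}v_1(\psi)$,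 $v_2(\phi\rightarrow\psi)=v_2(\psi)\ominus_\mathsf{G}v_2(\phi)$; $v_1(\phi\ominus\psi)=v_1(\phi)\ominus_\mathsf{G}v_1(\psi)$, $v_2(\phi\ominus\psi)=v_2(\psi)\rightarrow_\mathsf{G}v_2(\phi)$ (all at the same state $w$); $v_1(\Box\phi,w)=\inf\{v_1(\phi,w'):wRw'\}$, $v_2(\Box\phi,w)=\sup\{v_2(\phi,w'):wRw'\}$, $v_1(\lozenge\phi,w)=\sup\{v_1(\phi,w'):wRw'\}$, $v_2(\lozenge\phi,w)=\inf\{v_2(\phi,w'):wRw'\}$, with $\inf\varnothing=1$, $\sup\varnothing=0$. $\phi$ is $\mathbf{K}\mathsf{G}^2$ valid on a crisp frame $\mathfrak{F}$ ($\mathfrak{F}\models_{\mathbf{K}\mathsf{G}^2}\phi$) iff $v_1(\phi,w)=1$ and $v_2(\phi,w)=0$ for every $w\in\mathfrak{F}$ and every model on $\mathfrak{F}$. *)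

theory Defs
  imports Complex_Main
begin

datatype 'p fm =
    Var 'p
  | Neg "'p fm"
  | Conj "'p fm" "'p fm"
  | Disj "'p fm" "'p fm"
  | Imp "'p fm" "'p fm"
  | Coimp "'p fm" "'p fm"
  | Box "'p fm"
  | Dia "'p fm"

definition g_imp :: "real \<Rightarrow> real \<Rightarrow> real" where
  "g_imp a b = (if a \<le> b then 1 else b)"

definition g_coimp :: "real \<Rightarrow> real \<Rightarrow> real" where
  "g_coimp b a = (if b \<le> a then 0 else b)"

definition inf01 :: "real set \<Rightarrow> real" where
  "inf01 S = (if S = {} then 1 else Inf S)"

definition sup01 :: "real set \<Rightarrow> real" where
  "sup01 S = (if S = {} then 0 else Sup S)"

fun sem :: "'w set \<Rightarrow> ('w \<Rightarrow> 'w \<Rightarrow> bool) \<Rightarrow> ('p \<Rightarrow> 'w \<Rightarrow> real) \<Rightarrow> ('p \<Rightarrow> 'w \<Rightarrow> real)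
             \<Rightarrow> 'p fm \<Rightarrow> 'w \<Rightarrow> real \<times> real" where
  "sem W R e1 e2 (Var p) w = (e1 p w, e2 p w)"
| "sem W R e1 e2 (Neg a) w = (snd (sem W R e1 e2 a w), fst (sem W R e1 e2 a w))"
| "sem W R e1 e2 (Conj a b) w =
     (min (fst (sem W R e1 e2 a w)) (fst (sem W R e1 e2 b w)),
      max (snd (sem W R e1 e2 a w)) (snd (sem W R e1 e2 b w)))"
| "sem W R e1 e2 (Disj a b) w =
     (max (fst (sem W R e1 e2 a w)) (fst (sem W R e1 e2 b w)),
      min (snd (sem W R e1 e2 a w)) (snd (sem W R e1 e2 b w)))"
| "sem W R e1 e2 (Imp a b) w =
     (g_imp (fst (sem W R e1 e2 a w)) (fst (sem W R e1 e2 b w)),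
      g_coimp (snd (sem W R e1 e2 b w)) (snd (sem W R e1 e2 a w)))"
| "sem W R e1 e2 (Coimp a b) w =
     (g_coimp (fst (sem W R e1 e2 a w)) (fst (sem W R e1 e2 b w)),
      g_imp (snd (sem W R e1 e2 b w)) (snd (sem W R e1 e2 a w)))"
| "sem W R e1 e2 (Box a) w =
     (inf01 {fst (sem W R e1 e2 a u) | u. u \<in> W \<and> R w u},
      sup01 {snd (sem W R e1 e2 a u) | u. u \<in> W \<and> R w u})"
| "sem W R e1 e2 (Dia a) w =
     (sup01 {fst (sem W R e1 e2 a u) | u. u \<in> W \<and> R w u},
      inf01 {snd (sem W R e1 e2 a u) | u. u \<in> W \<and> R w u})"

definition v1 where "v1 W R e1 e2 \<phi> w = fst (sem W R e1 e2 \<phi> w)"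
definition v2 where "v2 W R e1 e2 \<phi> w = snd (sem W R e1 e2 \<phi> w)"

definition crisp_frame :: "'w set \<Rightarrow> ('w \<Rightarrow> 'w \<Rightarrow> bool) \<Rightarrow> bool" where
  "crisp_frame W R \<longleftrightarrow> (\<forall>x y. R x y \<longrightarrow> x \<in> W \<and> y \<in> W)"

definition is_model :: "'w set \<Rightarrow> ('w \<Rightarrow> 'w \<Rightarrow> bool) \<Rightarrow> ('p \<Rightarrow> 'w \<Rightarrow> real) \<Rightarrow> ('p \<Rightarrow> 'w \<Rightarrow> real) \<Rightarrow> bool" where
  "is_model W R e1 e2 \<longleftrightarrow>
     (\<forall>p. \<forall>w\<in>W. 0 \<le> e1 p w \<and> e1 p w \<le> 1 \<and> 0 \<le> e2 p w \<and> e2 p w \<le> 1)"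

definition KG2_valid :: "'w set \<Rightarrow> ('w \<Rightarrow> 'w \<Rightarrow> bool) \<Rightarrow> 'p fm \<Rightarrow> bool" where
  "KG2_valid W R \<phi> \<longleftrightarrow>
     (\<forall>e1 e2. is_model W R e1 e2 \<longrightarrow>
        (\<forall>w\<in>W. v1 W R e1 e2 \<phi> w = 1 \<and> v2 W R e1 e2 \<phi> w = 0))"

end

theory Submission
  imports Defs
begin

lemma inf01_bounds:
  assumes "\<forall>x\<in>S. 0 \<le> x \<and> x \<le> (1::real)"
  shows "0 \<le> inf01 S \<and> inf01 S \<le> 1"
proof (cases "S = {}")
  case True then show ?thesis by (simp add: inf01_def)
next
  case False
  then obtain x where x: "x \<in> S" by auto
  have bb: "bdd_below S" using assms by (intro bdd_belowI[of _ 0]) auto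
  have "Inf S \<le> x" using cInf_lower[OF x bb] .
  moreover have "0 \<le> Inf S" using False assms by (intro cInf_greatest) auto
  moreover have "x \<le> 1" using assms x by auto
  ultimately show ?thesis using False by (simp add: inf01_def)
qed

lemma sup01_bounds:
  assumes "\<forall>x\<in>S. 0 \<le> x \<and> x \<le> (1::real)"
  shows "0 \<le> sup01 S \<and> sup01 S \<le> 1"
proof (cases "S = {}")
  case True then show ?thesis by (simp add: sup01_def)
next
  case False
  then obtain x where x: "x \<in> S" by auto
  have bb: "bdd_above S" using assms by (auto simp: bdd_above_def)
  have "x \<le> Sup S" using cSup_upper[OF x bb] .
  moreover have "Sup S \<le> 1" using False assms by (intro cSup_least) auto
  moreover have "0 \<le> x" using assms x by auto
  ultimately show ?thesis using False by (simp add: sup01_def)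
qed

lemma inf01_neg:
  assumes "\<forall>x\<in>S. 0 \<le> x \<and> x \<le> (1::real)"
  shows "inf01 ((\<lambda>x. 1 - x) ` S) = 1 - sup01 S"
proof (cases "S = {}")
  case True then show ?thesis by (simp add: inf01_def sup01_def)
next
  case False
  have ba: "bdd_above S" using assms by (intro bdd_aboveI[of _ 1]) auto
  have bb: "bdd_below ((\<lambda>x. 1 - x) ` S)" using assms by (intro bdd_belowI[of _ 0]) auto
  have "Inf ((\<lambda>x. 1 - x) ` S) = 1 - Sup S"
  proof (rule antisym)
    show "Inf ((\<lambda>x. 1 - x) ` S) \<le> 1 - Sup S"
    proof -
      have h: "\<forall>x\<in>S. Inf ((\<lambda>x. 1 - x) ` S) \<le> 1 - x" using bb by (auto intro: cInf_lower)
      have "Sup S \<le> 1 - Inf ((\<lambda>x. 1 - x) ` S)"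
        using False h by (intro cSup_least) auto
      then show ?thesis by simp
    qed
    show "1 - Sup S \<le> Inf ((\<lambda>x. 1 - x) ` S)"
      using False ba by (intro cInf_greatest) (auto intro!: cSup_upper)
  qed
  then show ?thesis using False by (simp add: inf01_def sup01_def)
qed

lemma sup01_neg:
  assumes "\<forall>x\<in>S. 0 \<le> x \<and> x \<le> (1::real)"
  shows "sup01 ((\<lambda>x. 1 - x) ` S) = 1 - inf01 S"
proof (cases "S = {}")
  case True then show ?thesis by (simp add: inf01_def sup01_def)
next
  case False
  have bb: "bdd_below S" using assms by (intro bdd_belowI[of _ 0]) auto
  have ba: "bdd_above ((\<lambda>x. 1 - x) ` S)" using assms by (intro bdd_aboveI[of _ 1]) auto
  have "Sup ((\<lambda>x. 1 - x) ` S) = 1 - Inf S"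
  proof (rule antisym)
    show "Sup ((\<lambda>x. 1 - x) ` S) \<le> 1 - Inf S"
      using False bb by (intro cSup_least) (auto intro!: cInf_lower)
    show "1 - Inf S \<le> Sup ((\<lambda>x. 1 - x) ` S)"
    proof -
      have h: "\<forall>x\<in>S. 1 - x \<le> Sup ((\<lambda>x. 1 - x) ` S)" using ba by (auto intro: cSup_upper)
      have "1 - Sup ((\<lambda>x. 1 - x) ` S) \<le> Inf S"
        using False h by (intro cInf_greatest) auto
      then show ?thesis by simp
    qed
  qed
  then show ?thesis using False by (simp add: inf01_def sup01_def)
qed

lemma sem_bounds:
  assumes "is_model W R e1 e2"
  shows "w \<in> W \<Longrightarrow> 0 \<le> fst (sem W R e1 e2 \<phi> w) \<and> fst (sem W R e1 e2 \<phi> w) \<le> 1 \<and>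
                     0 \<le> snd (sem W R e1 e2 \<phi> w) \<and> snd (sem W R e1 e2 \<phi> w) \<le> 1"
proof (induction \<phi> arbitrary: w)
  case (Var x)
  then show ?case using assms by (simp add: is_model_def)
next
  case (Box \<phi>)
  have b1: "\<forall>x\<in>{fst (sem W R e1 e2 \<phi> u) | u. u \<in> W \<and> R w u}. 0 \<le> x \<and> x \<le> 1"
   and b2: "\<forall>x\<in>{snd (sem W R e1 e2 \<phi> u) | u. u \<in> W \<and> R w u}. 0 \<le> x \<and> x \<le> 1"
    using Box.IH by blast+
  show ?case unfolding sem.simps fst_conv snd_conv using inf01_bounds[OF b1] sup01_bounds[OF b2] by simp
next
  case (Dia \<phi>)
  have b1: "\<forall>x\<in>{fst (sem W R e1 e2 \<phi> u) | u. u \<in> W \<and> R w u}. 0 \<le> x \<and> x \<le> 1"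
   and b2: "\<forall>x\<in>{snd (sem W R e1 e2 \<phi> u) | u. u \<in> W \<and> R w u}. 0 \<le> x \<and> x \<le> 1"
    using Dia.IH by blast+
  show ?case unfolding sem.simps fst_conv snd_conv using sup01_bounds[OF b1] inf01_bounds[OF b2] by simp
next
  case (Neg a) then show ?case using Neg.IH[OF Neg.prems] by simp
next
  case (Conj a b) then show ?case using Conj.IH(1)[OF Conj.prems] Conj.IH(2)[OF Conj.prems] by (simp add: min_def max_def)
next
  case (Disj a b) then show ?case using Disj.IH(1)[OF Disj.prems] Disj.IH(2)[OF Disj.prems] by (simp add: min_def max_def)
next
  case (Imp a b) then show ?case using Imp.IH(1)[OF Imp.prems] Imp.IH(2)[OF Imp.prems] by (simp add: g_imp_def g_coimp_def)
next
  case (Coimp a b) then show ?case using Coimp.IH(1)[OF Coimp.prems] Coimp.IH(2)[OF Coimp.prems] by (simp add: g_imp_def g_coimp_def)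
qed

lemma sem_dual:
  assumes "is_model W R e1 e2"
  shows "fst (sem W R (\<lambda>p w. 1 - e2 p w) (\<lambda>p w. 1 - e1 p w) \<phi> w) = 1 - snd (sem W R e1 e2 \<phi> w) \<and>
         snd (sem W R (\<lambda>p w. 1 - e2 p w) (\<lambda>p w. 1 - e1 p w) \<phi> w) = 1 - fst (sem W R e1 e2 \<phi> w)"
proof (induction \<phi> arbitrary: w)
  case (Box \<phi>)
  let ?S1 = "{fst (sem W R e1 e2 \<phi> u) | u. u \<in> W \<and> R w u}"
  let ?S2 = "{snd (sem W R e1 e2 \<phi> u) | u. u \<in> W \<and> R w u}"
  have b1: "\<forall>x\<in>?S1. 0 \<le> x \<and> x \<le> 1" and b2: "\<forall>x\<in>?S2. 0 \<le> x \<and> x \<le> 1"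
    using sem_bounds[OF assms] by blast+
  have e1: "{fst (sem W R (\<lambda>p w. 1 - e2 p w) (\<lambda>p w. 1 - e1 p w) \<phi> u) | u. u \<in> W \<and> R w u}
      = (\<lambda>x. 1 - x) ` ?S2" using Box by auto
  have e2: "{snd (sem W R (\<lambda>p w. 1 - e2 p w) (\<lambda>p w. 1 - e1 p w) \<phi> u) | u. u \<in> W \<and> R w u}
      = (\<lambda>x. 1 - x) ` ?S1" using Box by auto
  show ?case unfolding sem.simps fst_conv snd_conv e1 e2
    using inf01_neg[OF b2] sup01_neg[OF b1] by simp
next
  case (Dia \<phi>)
  let ?S1 = "{fst (sem W R e1 e2 \<phi> u) | u. u \<in> W \<and> R w u}"
  let ?S2 = "{snd (sem W R e1 e2 \<phi> u) | u. u \<in> W \<and> R w u}"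
  have b1: "\<forall>x\<in>?S1. 0 \<le> x \<and> x \<le> 1" and b2: "\<forall>x\<in>?S2. 0 \<le> x \<and> x \<le> 1"
    using sem_bounds[OF assms] by blast+
  have e1: "{fst (sem W R (\<lambda>p w. 1 - e2 p w) (\<lambda>p w. 1 - e1 p w) \<phi> u) | u. u \<in> W \<and> R w u}
      = (\<lambda>x. 1 - x) ` ?S2" using Dia by auto
  have e2: "{snd (sem W R (\<lambda>p w. 1 - e2 p w) (\<lambda>p w. 1 - e1 p w) \<phi> u) | u. u \<in> W \<and> R w u}
      = (\<lambda>x. 1 - x) ` ?S1" using Dia by auto
  show ?case unfolding sem.simps fst_conv snd_conv e1 e2
    using inf01_neg[OF b1] sup01_neg[OF b2] by simp
next
  case (Imp a b) then show ?case by (simp add: g_imp_def g_coimp_def)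
next
  case (Coimp a b) then show ?case by (simp add: g_imp_def g_coimp_def)
next
  case (Conj a b) then show ?case by (simp add: min_def max_def)
next
  case (Disj a b) then show ?case by (simp add: min_def max_def)
qed simp_all

theorem proposition1:
  fixes W :: "'w set" and R :: "'w \<Rightarrow> 'w \<Rightarrow> bool" and \<phi> :: "'p fm"
  assumes "crisp_frame W R"
  shows "KG2_valid W R \<phi> \<longleftrightarrow>
           (\<forall>e1 e2. is_model W R e1 e2 \<longrightarrow> (\<forall>w\<in>W. v1 W R e1 e2 \<phi> w = 1))"
proof
  assume "KG2_valid W R \<phi>" then show "\<forall>e1 e2. is_model W R e1 e2 \<longrightarrow> (\<forall>w\<in>W. v1 W R e1 e2 \<phi> w = 1)"
    by (simp add: KG2_valid_def)
next
  assume H: "\<forall>e1 e2. is_model W R e1 e2 \<longrightarrow> (\<forall>w\<in>W. v1 W R e1 e2 \<phi> w = 1)"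
  show "KG2_valid W R \<phi>" unfolding KG2_valid_def
  proof (intro allI impI ballI conjI)
    fix e1 e2 :: "'p \<Rightarrow> 'w \<Rightarrow> real" and w assume m: "is_model W R e1 e2" and w: "w \<in> W"
    show "v1 W R e1 e2 \<phi> w = 1" using H m w by blast
    have m': "is_model W R (\<lambda>p w. 1 - e2 p w) (\<lambda>p w. 1 - e1 p w)"
      using m by (simp add: is_model_def)
    have "v1 W R (\<lambda>p w. 1 - e2 p w) (\<lambda>p w. 1 - e1 p w) \<phi> w = 1" using H m' w by blast
    then show "v2 W R e1 e2 \<phi> w = 0" using sem_dual[OF m, of \<phi> w] by (simp add: v1_def v2_def)
  qed
qed

end
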